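(* Let $r>0$ and let $Z$ be a set of homeomorphisms $[0,r)\to[0,r)$ such that (i) $(\alpha)z\ge\alpha$ for all $z\in Z$ and all $\alpha\in[0,r)$; (ii) $\mathrm{supp}(z)$ is an interval for every $z\in Z$; (iii) $\bigcup_{z\in Z}\mathrm{supp}(z)$ is dense in $(0,r)$. Let $f$ be a permutation of $[0,r)$ such that $f$ commutes with every $z\in Z$, $f$ is right-continuous at every point of $[0,r)$, and $f$ has only finitely many points of discontinuity. Then $f$ is continuous.
   Context: Maps act on the right. For a permutation $g$ of a set $S$, $\mathrm{fix}(g)$ is its set of fixed points and $\mathrm{supp}(g)=S\setminus\mathrm{fix}(g)$. *)

theory Defs
  imports "HOL-Analysis.Analysis"
begin

text \<open>Support of a map z restricted to the set S (maps act on the right: (alpha)z = z alpha).\<close>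
definition supp_on :: "real set \<Rightarrow> (real \<Rightarrow> real) \<Rightarrow> real set" where
  "supp_on S z = {a \<in> S. z a \<noteq> a}"

end

theory Submission
  imports Defs
begin

lemma orbit_up:
  fixes h :: "real \<Rightarrow> real"
  assumes hc: "continuous_on {0..<r} h" and hi: "h ` {0..<r} \<subseteq> {0..<r}"
    and hu: "\<forall>a\<in>{0..<r}. h a \<ge> a" and iS: "is_interval S" and Ss: "S \<subseteq> {0..<r}"
    and nf: "\<forall>a\<in>S. h a \<noteq> a" and y: "y \<in> S" and p: "p \<in> S"
  shows "\<exists>k. (h^^k) y \<ge> p"
proof (rule ccontr)
  assume "\<not> ?thesis"
  hence lt: "\<And>k. (h^^k) y < p" by (simp add: not_le)
  define s where "s k = (h^^k) y" for k
  have s_in: "s k \<in> {0..<r}" for k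
    by (induction k) (use y Ss hi in \<open>auto simp: s_def image_subset_iff\<close>)
  have sS: "s (Suc k) = h (s k)" for k by (simp add: s_def)
  have inc: "incseq s"
    by (rule incseq_SucI) (use hu s_in sS in auto)
  have bdd: "bdd_above (range s)" using lt unfolding s_def bdd_above_def by (auto intro!: exI[of _ p] less_imp_le)
  define l where "l = (SUP i. s i)"
  have lim: "s \<longlonglongrightarrow> l" unfolding l_def by (rule LIMSEQ_incseq_SUP[OF bdd inc])
  have s0: "\<forall>n. s 0 \<le> s n" using inc by (simp add: incseq_def)
  have l1: "y \<le> l" using s0 by (intro LIMSEQ_le_const[OF lim]) (auto simp: s_def)
  have l2: "l \<le> p" using lt by (intro LIMSEQ_le_const2[OF lim]) (auto simp: s_def less_imp_le)
  have lS: "l \<in> S" using iS y p l1 l2 unfolding is_interval_1 by blast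
  have lr: "l \<in> {0..<r}" using lS Ss by auto
  have "(\<lambda>k. h (s k)) \<longlonglongrightarrow> h l"
    by (rule continuous_on_tendsto_compose[OF hc lim lr]) (use s_in in auto)
  moreover have "(\<lambda>k. h (s k)) \<longlonglongrightarrow> l" using LIMSEQ_Suc[OF lim] by (simp add: sS)
  ultimately have "h l = l" using LIMSEQ_unique by blast
  thus False using nf lS by auto
qed

lemma orbit_down:
  fixes h :: "real \<Rightarrow> real"
  assumes hc: "continuous_on {0..<r} h" and hi: "h ` {0..<r} \<subseteq> {0..<r}"
    and hu: "\<forall>a\<in>{0..<r}. h a \<le> a" and iS: "is_interval S" and Ss: "S \<subseteq> {0..<r}"
    and nf: "\<forall>a\<in>S. h a \<noteq> a" and y: "y \<in> S" and p: "p \<in> S"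
  shows "\<exists>k. (h^^k) y \<le> p"
proof (rule ccontr)
  assume "\<not> ?thesis"
  hence lt: "\<And>k. (h^^k) y > p" by (simp add: not_le)
  define s where "s k = (h^^k) y" for k
  have s_in: "s k \<in> {0..<r}" for k
    by (induction k) (use y Ss hi in \<open>auto simp: s_def image_subset_iff\<close>)
  have sS: "s (Suc k) = h (s k)" for k by (simp add: s_def)
  have dec: "decseq s"
    by (rule decseq_SucI) (use hu s_in sS in auto)
  have bdd: "bdd_below (range s)" using lt unfolding s_def bdd_below_def by (auto intro!: exI[of _ p] less_imp_le)
  define l where "l = (INF i. s i)"
  have lim: "s \<longlonglongrightarrow> l" unfolding l_def by (rule LIMSEQ_decseq_INF[OF bdd dec])
  have s0: "\<forall>n. s n \<le> s 0" using dec by (simp add: decseq_def)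
  have l1: "l \<le> y" using s0 by (intro LIMSEQ_le_const2[OF lim]) (auto simp: s_def)
  have l2: "p \<le> l" using lt by (intro LIMSEQ_le_const[OF lim]) (auto simp: s_def less_imp_le)
  have lS: "l \<in> S" using iS y p l1 l2 unfolding is_interval_1 by blast
  have lr: "l \<in> {0..<r}" using lS Ss by auto
  have "(\<lambda>k. h (s k)) \<longlonglongrightarrow> h l"
    by (rule continuous_on_tendsto_compose[OF hc lim lr]) (use s_in in auto)
  moreover have "(\<lambda>k. h (s k)) \<longlonglongrightarrow> l" using LIMSEQ_Suc[OF lim] by (simp add: sS)
  ultimately have "h l = l" using LIMSEQ_unique by blast
  thus False using nf lS by auto
qed

lemma iter_facts:
  fixes h :: "real \<Rightarrow> real"
  assumes hA: "\<forall>a\<in>A. h a \<in> A" and fA: "\<forall>a\<in>A. f a \<in> A"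
    and com: "\<forall>a\<in>A. f (h a) = h (f a)" and a: "a \<in> A"
  shows "(h^^k) a \<in> A \<and> f ((h^^k) a) = (h^^k) (f a)"
  by (induction k) (use hA fA com a in auto)

lemma iter_S:
  fixes h :: "real \<Rightarrow> real"
  assumes hA: "\<forall>a\<in>S. h a \<in> S" and a: "a \<in> S"
  shows "(h^^k) a \<in> S"
  by (induction k) (use hA a in auto)

lemma iter_up:
  fixes h :: "real \<Rightarrow> real"
  assumes hA: "\<forall>a\<in>A. h a \<in> A \<and> h a \<ge> a" and a: "a \<in> A"
  shows "(h^^k) a \<in> A \<and> (h^^k) a \<ge> a"
  by (induction k) (use hA a in \<open>auto intro: order_trans\<close>)

lemma iter_down:
  fixes h :: "real \<Rightarrow> real"
  assumes hA: "\<forall>a\<in>A. h a \<in> A \<and> h a \<le> a" and a: "a \<in> A"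
  shows "(h^^k) a \<in> A \<and> (h^^k) a \<le> a"
  by (induction k) (use hA a in \<open>auto intro: order_trans\<close>)

theorem lemma3p2:
  fixes r :: real and Z :: "(real \<Rightarrow> real) set" and f :: "real \<Rightarrow> real"
  assumes r_pos: "r > 0"
    and homeo: "\<forall>z\<in>Z. \<exists>g. homeomorphism {0..<r} {0..<r} z g"
    and incr: "\<forall>z\<in>Z. \<forall>a\<in>{0..<r}. z a \<ge> a"
    and interval: "\<forall>z\<in>Z. is_interval (supp_on {0..<r} z)"
    and dense: "{0<..<r} \<subseteq> closure (\<Union>z\<in>Z. supp_on {0..<r} z)"
    and perm: "bij_betw f {0..<r} {0..<r}"
    and commute: "\<forall>z\<in>Z. \<forall>a\<in>{0..<r}. f (z a) = z (f a)"
    and rcont: "\<forall>a\<in>{0..<r}. continuous (at_right a) f"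
    and fin: "finite {a \<in> {0..<r}. \<not> continuous (at a within {0..<r}) f}"
  shows "continuous_on {0..<r} f"
proof -
  define A where "A = {0..<r::real}"
  define D where "D = {a \<in> {0..<r}. \<not> continuous (at a within {0..<r}) f}"
  have fA: "\<forall>a\<in>A. f a \<in> A" using perm unfolding A_def bij_betw_def by auto
  have fimg: "f ` A = A" using perm unfolding A_def bij_betw_def by auto
  have finj: "inj_on f A" using perm unfolding A_def bij_betw_def by auto
  have zf: "\<exists>g. (\<forall>a\<in>A. z a \<in> A \<and> g a \<in> A \<and> g (z a) = a \<and> z (g a) = a \<and> g a \<le> a
       \<and> f (g a) = g (f a)) \<and> continuous_on A z \<and> continuous_on A g \<and> z ` A = A \<and> g ` A = A"
    if z: "z \<in> Z" for z
  proof -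
    obtain g where hg: "homeomorphism A A z g" using homeo z unfolding A_def by auto
    have gz: "\<forall>a\<in>A. g (z a) = a" and zg: "\<forall>a\<in>A. z (g a) = a" and zi: "z ` A = A" and gi: "g ` A = A"
      and cz: "continuous_on A z" and cg: "continuous_on A g"
      using hg unfolding homeomorphism_def by auto
    have zA: "\<forall>a\<in>A. z a \<in> A" and gA: "\<forall>a\<in>A. g a \<in> A" using zi gi by auto
    have gle: "\<forall>a\<in>A. g a \<le> a"
    proof
      fix a assume "a \<in> A"
      hence "z (g a) \<ge> g a" using incr z gA unfolding A_def by auto
      thus "g a \<le> a" using zg \<open>a\<in>A\<close> by auto
    qed
    have fg: "\<forall>a\<in>A. f (g a) = g (f a)"
    proof
      fix a assume a: "a \<in> A"
      have "f a = f (z (g a))" using zg a by auto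
      also have "\<dots> = z (f (g a))" using commute z gA a unfolding A_def by auto
      finally have "g (f a) = g (z (f (g a)))" by simp
      also have "\<dots> = f (g a)" using gz fA gA a by auto
      finally show "f (g a) = g (f a)" by simp
    qed
    show ?thesis using zA gA gz zg gle fg cz cg zi gi by (intro exI[of _ g]) auto
  qed
  have fixD: "z d = d" if z: "z \<in> Z" and d: "d \<in> D" for z d
  proof -
    obtain g where G: "\<forall>a\<in>A. z a \<in> A \<and> g a \<in> A \<and> g (z a) = a \<and> z (g a) = a \<and> g a \<le> a
       \<and> f (g a) = g (f a)" and cz: "continuous_on A z" and cg: "continuous_on A g"
      and zi: "z ` A = A" and gi: "g ` A = A"
      using zf[OF z] by blast
    have gD: "g a \<in> D" if a: "a \<in> D" for a
    proof (rule ccontr)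
      assume "g a \<notin> D"
      have aA: "a \<in> A" using a unfolding D_def A_def by auto
      hence gaA: "g a \<in> A" using G by auto
      hence c1: "continuous (at (g a) within A) f" using \<open>g a \<notin> D\<close> unfolding D_def A_def by auto
      have c0: "continuous (at a within A) g" using cg aA continuous_on_eq_continuous_within by blast
      have c2: "continuous (at (f (g a)) within A) z" using cz fA gaA continuous_on_eq_continuous_within by blast
      have "continuous (at a within A) (\<lambda>x. f (g x))"
        by (rule continuous_within_compose2[OF c0]) (use c1 gi in simp)
      hence "continuous (at a within A) (\<lambda>x. z (f (g x)))"
        by (rule continuous_within_compose2) (use c2 gi fimg in \<open>simp add: image_image[symmetric]\<close>)
      moreover have eq: "\<forall>x\<in>A. z (f (g x)) = f x"
      proof
        fix x assume x: "x \<in> A"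
        have gx: "g x \<in> A" using G x by auto
        have "f (z (g x)) = z (f (g x))" using commute z gx unfolding A_def by auto
        hence "z (f (g x)) = f (z (g x))" by simp
        thus "z (f (g x)) = f x" using G x by auto
      qed
      ultimately have "continuous (at a within A) f"
        unfolding continuous_within
        apply (subst (asm) tendsto_cong[where g=f])
        using eq aA by (auto simp: eventually_at_filter)
      thus False using a unfolding D_def A_def by auto
    qed
    show ?thesis
    proof (rule ccontr)
      assume nd: "z d \<noteq> d"
      define M where "M = {x\<in>D. z x \<noteq> x}"
      have fM: "finite M" using fin unfolding M_def D_def by (rule rev_finite_subset) auto
      have "M \<noteq> {}" using nd d unfolding M_def by auto
      define m where "m = Min M"
      have mM: "m \<in> M" using fM \<open>M \<noteq> {}\<close> unfolding m_def by auto
      have mA: "m \<in> A" using mM unfolding M_def D_def A_def by auto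
      have bD: "g m \<in> D" using gD mM unfolding M_def by auto
      have zb: "z (g m) = m" and ble: "g m \<le> m" using G mA by auto
      have "g m \<noteq> m" using zb mM unfolding M_def by auto
      hence "g m \<in> M" using bD zb unfolding M_def by auto
      hence "m \<le> g m" using fM unfolding m_def by auto
      thus False using ble \<open>g m \<noteq> m\<close> by auto
    qed
  qed
  have D0: "0 \<notin> D"
  proof -
    have "continuous (at 0 within {0<..}) f" using rcont r_pos by auto
    moreover have "at (0::real) within {0..<r} = at 0 within {0<..}"
      by (rule at_within_nhd[where S="{..<r}"]) (use r_pos in auto)
    ultimately show ?thesis unfolding D_def by auto
  qed
  have suppf: "f x \<in> supp_on A z" if z: "z \<in> Z" and x: "x \<in> supp_on A z" for z x
  proof -
    have xA: "x \<in> A" and zx: "z x \<noteq> x" using x unfolding supp_on_def by auto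
    have "f (z x) = z (f x)" using commute z xA unfolding A_def by auto
    moreover have "z x \<in> A" using zf[OF z] xA by auto
    moreover have "f (z x) \<noteq> f x" using finj zx xA \<open>z x \<in> A\<close> by (auto dest: inj_onD)
    ultimately show ?thesis using fA xA unfolding supp_on_def by auto
  qed
  have keyR: "\<exists>w\<in>A. d < w \<and> w < d + e \<and> \<bar>f w - d\<bar> < e"
    if d: "d \<in> D" "0 < d" "d < r" and e: "e > 0" for d e
  proof -
    define t where "t = min (d+e) r"
    have m1: "(d+t)/2 \<in> {d<..<t}" "(d+t)/2 \<in> {0<..<r}" using d e r_pos unfolding t_def by auto
    have "(d+t)/2 \<in> {d<..<t} \<inter> closure (\<Union>z\<in>Z. supp_on {0..<r} z)"
      using dense m1 by blast
    hence "{d<..<t} \<inter> (\<Union>z\<in>Z. supp_on {0..<r} z) \<noteq> {}"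
      using open_Int_closure_eq_empty[of "{d<..<t}" "\<Union>z\<in>Z. supp_on {0..<r} z"] by (simp only: open_greaterThanLessThan) blast
    then obtain x where x: "x \<in> {d<..<t}" and xU: "x \<in> (\<Union>z\<in>Z. supp_on {0..<r} z)" by blast
    then obtain z where z: "z \<in> Z" and xI: "x \<in> supp_on A z"
      unfolding A_def by blast
    obtain g where G: "\<forall>a\<in>A. z a \<in> A \<and> g a \<in> A \<and> g (z a) = a \<and> z (g a) = a \<and> g a \<le> a
       \<and> f (g a) = g (f a)" and cg: "continuous_on A g" and gi: "g ` A = A"
      using zf[OF z] by blast
    define I where "I = supp_on A z"
    have iI: "is_interval I" using interval z unfolding I_def A_def by auto
    have IA: "I \<subseteq> A" unfolding I_def supp_on_def by auto
    have dI: "d \<notin> I" using fixD[OF z d(1)] unfolding I_def supp_on_def by auto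
    have Id: "\<forall>y\<in>I. d < y"
    proof
      fix y assume y: "y \<in> I"
      show "d < y"
      proof (rule ccontr)
        assume "\<not> d < y"
        hence "y \<le> d" by simp
        moreover have "d \<le> x" using x by auto
        ultimately have "d \<in> I" using iI y xI unfolding is_interval_1 I_def by blast
        thus False using dI by simp
      qed
    qed
    have gI: "\<forall>a\<in>I. g a \<in> I"
    proof
      fix a assume a: "a \<in> I"
      hence aA: "a \<in> A" and za: "z a \<noteq> a" using IA unfolding I_def supp_on_def by auto
      have Ga: "g a \<in> A" "z (g a) = a" using G aA by auto
      have Gga: "z (g (g a)) = g a" using G Ga(1) by auto
      have ne: "g a \<noteq> a" using Ga za by auto
      have "z (g a) \<noteq> g a" using Ga ne by auto
      thus "g a \<in> I" using Ga(1) unfolding I_def supp_on_def by auto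
    qed
    have gnf: "\<forall>a\<in>I. g a \<noteq> a"
    proof
      fix a assume a: "a \<in> I"
      hence aA: "a \<in> A" and za: "z a \<noteq> a" using IA unfolding I_def supp_on_def by auto
      have Ga: "g a \<in> A" "z (g a) = a" using G aA by auto
      show "g a \<noteq> a" using Ga za by auto
    qed
    have fxI: "f x \<in> I" using suppf[OF z xI] unfolding I_def .
    obtain k where k: "(g^^k) (f x) \<le> x"
    proof -
      have gle: "\<forall>a\<in>{0..<r}. g a \<le> a" using G unfolding A_def by blast
      have cg': "continuous_on {0..<r} g" using cg unfolding A_def .
      have gi': "g ` {0..<r} \<subseteq> {0..<r}" using gi unfolding A_def by simp
      have IA': "I \<subseteq> {0..<r}" using IA unfolding A_def .
      have xI': "x \<in> I" using xI unfolding I_def .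
      show ?thesis using orbit_down[OF cg' gi' gle iI IA' gnf fxI xI'] that by blast
    qed
    define w where "w = (g^^k) x"
    have xA: "x \<in> A" using xI IA unfolding I_def by auto
    have wI: "w \<in> I" using iter_S[OF gI] xI unfolding w_def I_def by auto
    have wle: "w \<le> x" using iter_down[of A g x k] G xA unfolding w_def by auto
    have fw: "f w = (g^^k) (f x)" using iter_facts[of A g f x k] G fA xA unfolding w_def by auto
    have fwI: "f w \<in> I" using iter_S[OF gI fxI] fw by auto
    show ?thesis
      using wI IA Id fwI fw k wle x unfolding t_def by (intro bexI[of _ w]) auto
  qed
  have keyL: "\<exists>w\<in>A. d - e < w \<and> w < d \<and> \<bar>f w - d\<bar> < e"
    if d: "d \<in> D" "0 < d" "d < r" and e: "e > 0" for d e
  proof -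
    define t where "t = max (d-e) 0"
    have m1: "(d+t)/2 \<in> {t<..<d}" "(d+t)/2 \<in> {0<..<r}" using d e r_pos unfolding t_def by auto
    have "(d+t)/2 \<in> {t<..<d} \<inter> closure (\<Union>z\<in>Z. supp_on {0..<r} z)"
      using dense m1 by blast
    hence "{t<..<d} \<inter> (\<Union>z\<in>Z. supp_on {0..<r} z) \<noteq> {}"
      using open_Int_closure_eq_empty[of "{t<..<d}" "\<Union>z\<in>Z. supp_on {0..<r} z"] by (simp only: open_greaterThanLessThan) blast
    then obtain x where x: "x \<in> {t<..<d}" and xU: "x \<in> (\<Union>z\<in>Z. supp_on {0..<r} z)" by blast
    then obtain z where z: "z \<in> Z" and xI: "x \<in> supp_on A z"
      unfolding A_def by blast
    obtain g where G: "\<forall>a\<in>A. z a \<in> A \<and> g a \<in> A \<and> g (z a) = a \<and> z (g a) = a \<and> g a \<le> a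
       \<and> f (g a) = g (f a)" and cz: "continuous_on A z" and zi: "z ` A = A"
      using zf[OF z] by blast
    define I where "I = supp_on A z"
    have iI: "is_interval I" using interval z unfolding I_def A_def by auto
    have IA: "I \<subseteq> A" unfolding I_def supp_on_def by auto
    have dI: "d \<notin> I" using fixD[OF z d(1)] unfolding I_def supp_on_def by auto
    have Id: "\<forall>y\<in>I. y < d"
    proof
      fix y assume y: "y \<in> I"
      show "y < d"
      proof (rule ccontr)
        assume "\<not> y < d"
        hence "d \<le> y" by simp
        moreover have "x \<le> d" using x by auto
        ultimately have "d \<in> I" using iI y xI unfolding is_interval_1 I_def by blast
        thus False using dI by simp
      qed
    qed
    have zI: "\<forall>a\<in>I. z a \<in> I"
    proof
      fix a assume a: "a \<in> I"
      hence aA: "a \<in> A" and za: "z a \<noteq> a" using IA unfolding I_def supp_on_def by auto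
      have Ga: "z a \<in> A" "g (z a) = a" using G aA by auto
      have Gza: "g (z (z a)) = z a" using G Ga(1) by auto
      have "z (z a) \<noteq> z a" proof assume "z (z a) = z a" hence "g (z (z a)) = g (z a)" by simp thus False using Gza Ga za by auto qed
      thus "z a \<in> I" using Ga(1) unfolding I_def supp_on_def by auto
    qed
    have znf: "\<forall>a\<in>I. z a \<noteq> a" unfolding I_def supp_on_def by auto
    have zup: "\<forall>a\<in>A. z a \<in> A \<and> z a \<ge> a" using G incr z unfolding A_def by auto
    have fxI: "f x \<in> I" using suppf[OF z xI] unfolding I_def .
    obtain k where k: "(z^^k) (f x) \<ge> x"
    proof -
      have zle: "\<forall>a\<in>{0..<r}. z a \<ge> a" using zup unfolding A_def by blast
      have cz': "continuous_on {0..<r} z" using cz unfolding A_def .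
      have zi': "z ` {0..<r} \<subseteq> {0..<r}" using zi unfolding A_def by simp
      have IA': "I \<subseteq> {0..<r}" using IA unfolding A_def .
      have xI': "x \<in> I" using xI unfolding I_def .
      show ?thesis using orbit_up[OF cz' zi' zle iI IA' znf fxI xI'] that by blast
    qed
    define w where "w = (z^^k) x"
    have xA: "x \<in> A" using xI IA unfolding I_def by auto
    have wI: "w \<in> I" using iter_S[OF zI] xI unfolding w_def I_def by auto
    have wle: "w \<ge> x" using iter_up[of A z x k] zup xA unfolding w_def by auto
    have fw: "f w = (z^^k) (f x)" using iter_facts[of A z f x k] G fA xA commute z
      unfolding w_def A_def by auto
    have fwI: "f w \<in> I" using iter_S[OF zI fxI] fw by auto
    show ?thesis
      using wI IA Id fwI fw k wle x unfolding t_def by (intro bexI[of _ w]) auto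
  qed
  have "D = {}"
  proof (rule ccontr)
    assume "D \<noteq> {}"
    then obtain d where dD: "d \<in> D" by auto
    have d0: "0 < d" "d < r" using dD D0 unfolding D_def by (auto simp: le_less)
    have dA: "d \<in> A" using d0 unfolding A_def by auto
    have rc: "continuous (at_right d) f" using rcont d0 by auto
    have fd: "f d = d"
    proof (rule ccontr)
      assume ne: "f d \<noteq> d"
      define e where "e = \<bar>f d - d\<bar> / 2"
      have e: "e > 0" using ne unfolding e_def by auto
      have "eventually (\<lambda>x. dist (f x) (f d) < e) (at_right d)"
        using rc e unfolding continuous_within tendsto_iff by blast
      then obtain b where b: "b > d" "\<forall>y>d. y < b \<longrightarrow> dist (f y) (f d) < e"
        unfolding eventually_at_right_field by auto
      obtain w where w: "d < w" "w < d + min e (b - d)" "\<bar>f w - d\<bar> < min e (b-d)"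
        using keyR[OF dD d0, of "min e (b-d)"] e b by auto
      have "dist (f w) (f d) < e" using b w by auto
      hence h1: "\<bar>f w - f d\<bar> < e" unfolding dist_real_def .
      have h2: "\<bar>f w - d\<bar> < e" using w(3) by simp
      have "\<bar>f d - d\<bar> < 2 * e" using h1 h2 by linarith
      thus False unfolding e_def by simp
    qed
    define c where "c = Max (insert 0 {x\<in>D. x < d})"
    have fD: "finite D" using fin unfolding D_def .
    have fC: "finite (insert 0 {x\<in>D. x < d})" using fD by simp
    have c0: "0 \<le> c" "c < d" using fC d0 unfolding c_def by auto
    have cfree: "x \<notin> D" if "c < x" "x < d" for x using that fC unfolding c_def
      using Max_ge[OF fC, of x] by auto
    have contx: "continuous (at x) f" if "c < x" "x < d" for x
    proof -
      have "x \<notin> D" using cfree that by auto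
      hence "continuous (at x within {0..<r}) f" using that c0 d0 unfolding D_def by auto
      moreover have "at x within {0..<r} = at x"
        by (rule at_within_interior) (use that c0 d0 in auto)
      ultimately show ?thesis by simp
    qed
    have lc: "continuous (at_left d) f"
      unfolding continuous_within tendsto_iff eventually_at_left_field
    proof (intro allI impI)
      fix e :: real assume e: "e > 0"
      obtain w where w: "w \<in> A" "d - min e (d-c) < w" "w < d" "\<bar>f w - d\<bar> < min e (d-c)"
        using keyL[OF dD d0, of "min e (d-c)"] e c0 by auto
      show "\<exists>b<d. \<forall>y>b. y < d \<longrightarrow> dist (f y) (f d) < e"
      proof (intro exI[of _ w] conjI allI impI)
        show "w < d" by fact
        fix y assume y: "w < y" "y < d"
        obtain w' where w': "w' \<in> A" "d - min e (d-y) < w'" "w' < d" "\<bar>f w' - d\<bar> < min e (d-y)"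
          using keyL[OF dD d0, of "min e (d-y)"] e y by auto
        have wy: "y < w'" using w' by auto
        have cw: "c < w" using w by auto
        have "continuous_on {w..w'} f"
          by (rule continuous_at_imp_continuous_on) (use contx cw w' in auto)
        moreover have "inj_on f {w..w'}"
          by (rule inj_on_subset[OF finj]) (use cw c0 w' d0 in \<open>auto simp: A_def\<close>)
        ultimately have "(f w < f y \<and> f y < f w') \<or> (f w' < f y \<and> f y < f w)"
          using continuous_inj_imp_mono[of w y w' f] y wy by auto
        thus "dist (f y) (f d) < e" using w w' fd unfolding dist_real_def by auto
      qed
    qed
    have "continuous (at d) f" using lc rc continuous_at_split by blast
    moreover have "at d within {0..<r} = at d"
      by (rule at_within_interior) (use d0 in auto)
    ultimately show False using dD unfolding D_def by auto
  qed
  thus ?thesis unfolding continuous_on_eq_continuous_within D_def by auto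
qed

end
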